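(* Let $\langle X,\tau\rangle$ be a first-countable Hausdorff space containing $[0,1)$ as a dense and co-dense subset whose subspace topology is the Sorgenfrey topology on $[0,1)$ (generated by $\{[a,b)\cap[0,1)\}$). For $z\in X\setminus[0,1)$ let $\mathsf L(z)$ be the set of $x\in[0,1]$ for which there exists a sequence $p$ in $[0,1)$ converging to $z$ in $\langle X,\tau\rangle$ and converging to $x$ in $[0,1]$ with its usual Euclidean topology. Then for every $z\in X\setminus[0,1)$, $\mathsf L(z)$ is nonempty and is well-ordered by the usual order $<$ of the reals.
   Context: A subset is co-dense if its complement is dense. *)

theory Defs
  imports "HOL-Analysis.Analysis"
begin

definition sorgenfrey01 :: "real topology" where
  "sorgenfrey01 = topology_generated_by {{a..<b} \<inter> {0..<1} | a b. True}"

text \<open>L(z): limits in the Euclidean [0,1] of sequences in [0,1) converging to z in X,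
  where [0,1) sits inside X via the embedding i.\<close>
definition Lset :: "'a topology \<Rightarrow> (real \<Rightarrow> 'a) \<Rightarrow> 'a \<Rightarrow> real set" where
  "Lset X i z = {x \<in> {0..1}. \<exists>p :: nat \<Rightarrow> real. (\<forall>n. p n \<in> {0..<1})
      \<and> limitin X (\<lambda>n. i (p n)) z sequentially \<and> p \<longlonglongrightarrow> x}"

end

theory Submission
  imports Defs
begin

lemma sorg_topspace: "topspace sorgenfrey01 = {0..<1}"
  unfolding sorgenfrey01_def topology_generated_by_topspace
proof (rule equalityI)
  show "\<Union>{{a..<b} \<inter> {0..<1} | a b. True} \<subseteq> {0..<(1::real)}" by blast
  have "{0..<1} \<inter> {0..<1} \<in> {{a..<b} \<inter> {0..<1::real} | a b. True}" by blast
  then show "{0..<(1::real)} \<subseteq> \<Union>{{a..<b} \<inter> {0..<1} | a b. True}" by blast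
qed

lemma sorg_open:
  assumes "openin sorgenfrey01 U" "y \<in> U"
  shows "\<exists>e>0. {y..<y+e} \<inter> {0..<1} \<subseteq> U"
proof -
  have "generate_topology_on {{a..<b} \<inter> {0..<1} | a b. True} U"
    using assms(1) unfolding sorgenfrey01_def by (rule openin_topology_generated_by)
  then show ?thesis using assms(2)
  proof (induction arbitrary: y)
    case Empty
    then show ?case by simp
  next
    case (Int a b)
    from Int.prems have ya: "y \<in> a" and yb: "y \<in> b" by auto
    obtain e1 where e1: "e1>0" "{y..<y+e1} \<inter> {0..<1} \<subseteq> a" using Int.IH(1)[OF ya] by blast
    obtain e2 where e2: "e2>0" "{y..<y+e2} \<inter> {0..<1} \<subseteq> b" using Int.IH(2)[OF yb] by blast
    have "{y..<y+min e1 e2} \<inter> {0..<1} \<subseteq> {y..<y+e1} \<inter> {0..<1}"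
      by (intro Int_mono) auto
    moreover have "{y..<y+min e1 e2} \<inter> {0..<1} \<subseteq> {y..<y+e2} \<inter> {0..<1}"
      by (intro Int_mono) auto
    ultimately have "{y..<y+min e1 e2} \<inter> {0..<1} \<subseteq> a \<inter> b" using e1 e2 by (meson Int_greatest order_trans)
    moreover have "0 < min e1 e2" using e1 e2 by simp
    ultimately show ?case by (intro exI[of _ "min e1 e2"] conjI)
  next
    case (UN K)
    then obtain k where "k \<in> K" "y \<in> k" by blast
    with UN obtain e where "e>0" "{y..<y+e} \<inter> {0..<1} \<subseteq> k" by blast
    moreover have "k \<subseteq> \<Union>K" using \<open>k \<in> K\<close> by (rule Union_upper)
    ultimately have "{y..<y+e} \<inter> {0..<1} \<subseteq> \<Union>K" "e > 0" by (meson order_trans)+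
    then show ?case by (intro exI[of _ e] conjI)
  next
    case (Basis s)
    then obtain a b where s: "s = {a..<b} \<inter> {0..<1}" by blast
    from Basis s have y: "a \<le> y" "y < b" by auto
    have "{y..<y+(b-y)} \<subseteq> {a..<b}" using y by auto
    then have "{y..<y+(b-y)} \<inter> {0..<1} \<subseteq> s" unfolding s by (intro Int_mono) auto
    moreover have "0 < b - y" using y by simp
    ultimately show ?case by (intro exI[of _ "b-y"] conjI)
  qed
qed

theorem mainTheorem13:
  fixes X :: "'a topology" and i :: "real \<Rightarrow> 'a"
  assumes "Hausdorff_space X"
    and "first_countable X"
    and "i ` {0..<1} \<subseteq> topspace X"
    and "homeomorphic_map sorgenfrey01 (subtopology X (i ` {0..<1})) i"
    and "X closure_of (i ` {0..<1}) = topspace X"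
    and "X closure_of (topspace X - i ` {0..<1}) = topspace X"
    and "z \<in> topspace X - i ` {0..<1}"
  shows "Lset X i z \<noteq> {} \<and>
         (\<forall>S. S \<subseteq> Lset X i z \<and> S \<noteq> {} \<longrightarrow> (\<exists>m\<in>S. \<forall>s\<in>S. m \<le> s))"
proof
  have zX: "z \<in> topspace X" using assms(7) by blast
  have "\<exists>B. countable B \<and> (\<forall>V \<in> B. openin X V) \<and>
      (\<forall>U. openin X U \<and> z \<in> U \<longrightarrow> (\<exists>V \<in> B. z \<in> V \<and> V \<subseteq> U))"
    using assms(2) zX unfolding first_countable_def by (rule bspec)
  then obtain B where B: "countable B \<and> (\<forall>V \<in> B. openin X V) \<and>
      (\<forall>U. openin X U \<and> z \<in> U \<longrightarrow> (\<exists>V \<in> B. z \<in> V \<and> V \<subseteq> U))" ..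
  have Bc: "countable B" using B by (rule conjunct1)
  have Bo: "\<forall>V \<in> B. openin X V" by (rule conjunct1[OF conjunct2[OF B]])
  have Bn: "\<forall>U. openin X U \<and> z \<in> U \<longrightarrow> (\<exists>V \<in> B. z \<in> V \<and> V \<subseteq> U)" by (rule conjunct2[OF conjunct2[OF B]])
  define C where "C = {V \<in> B. z \<in> V}"
  have Cc: "countable C" using Bc unfolding C_def by simp
  obtain V0 where "V0 \<in> B" "z \<in> V0" using Bn zX openin_topspace by meson
  then have Cne: "C \<noteq> {}" unfolding C_def by blast
  define b where "b = from_nat_into C"
  have bC: "b n \<in> C" for n unfolding b_def using Cne by (simp add: from_nat_into)
  have Crange: "C = range b" unfolding b_def using Cc Cne by (simp add: range_from_nat_into)
  define W where "W n = (\<Inter>k\<le>n. b k)" for n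
  have Wo: "openin X (W n)" for n
    unfolding W_def using bC Bo C_def by (intro openin_Inter) auto
  have Wz: "z \<in> W n" for n unfolding W_def using bC C_def by auto
  have "\<exists>p. p \<in> {0..<1} \<and> i p \<in> W n" for n
  proof -
    have "z \<in> X closure_of (i ` {0..<1})" using assms(5) zX by simp
    then have "\<exists>y. y \<in> i ` {0..<1} \<and> y \<in> W n" using Wo[of n] Wz[of n] unfolding in_closure_of by blast
    then show ?thesis by blast
  qed
  then have "\<forall>n. \<exists>p. p \<in> {0..<1} \<and> i p \<in> W n" by blast
  from choice[OF this] obtain p where p0: "\<forall>n. p n \<in> {0..<1} \<and> i (p n) \<in> W n" by blast
  have p: "\<And>n. p n \<in> {0..<1} \<and> i (p n) \<in> W n" using p0 by blast
  have plim: "limitin X (\<lambda>n. i (p n)) z sequentially"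
    unfolding limitin_sequentially
  proof (intro conjI allI impI zX)
    fix U assume U: "openin X U \<and> z \<in> U"
    then obtain V where "V \<in> B" "z \<in> V" "V \<subseteq> U" using Bn by blast
    then have "V \<in> C" unfolding C_def by simp
    then obtain k where k: "V = b k" using Crange by auto
    show "\<exists>N. \<forall>n\<ge>N. i (p n) \<in> U"
    proof (intro exI allI impI)
      fix n assume "k \<le> n"
      then have "W n \<subseteq> b k" unfolding W_def by auto
      then show "i (p n) \<in> U" using p[of n] k \<open>V \<subseteq> U\<close> by auto
    qed
  qed
  have cpt: "compact {0..1::real}" by simp
  have p01: "\<forall>n. p n \<in> {0..1}"
  proof
    fix n show "p n \<in> {0..1}" using p[of n] by auto
  qed
  obtain l r where l: "l \<in> {0..1}" "strict_mono r" "(p \<circ> r) \<longlonglongrightarrow> l"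
    by (rule seq_compactE[OF compact_imp_seq_compact[OF cpt] p01])
  have L1: "limitin X (\<lambda>n. i ((p \<circ> r) n)) z sequentially"
    using limitin_subsequence[OF l(2) plim] by (simp add: o_def)
  have L2: "\<forall>n. (p \<circ> r) n \<in> {0..<1}" using p by simp
  have "l \<in> Lset X i z"
    unfolding Lset_def using l(1) l(3) L1 L2 by blast
  then show "Lset X i z \<noteq> {}" by blast
next
  have zX: "z \<in> topspace X" using assms(7) by blast
  have cont: "continuous_map sorgenfrey01 X i"
    using homeomorphic_imp_continuous_map[OF assms(4)] continuous_map_into_fulltopology by blast
  have key: "\<exists>e>0. \<forall>x\<in>Lset X i z. \<not> (y < x \<and> x < y + e)" if y: "y \<in> {0..<1}" for y
  proof -
    have "i y \<in> topspace X" "i y \<noteq> z" using assms(3,7) y by auto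
    then obtain A Bs where AB: "openin X A" "openin X Bs" "z \<in> A" "i y \<in> Bs" "disjnt A Bs"
      using assms(1) zX \<open>i y \<in> topspace X\<close> \<open>i y \<noteq> z\<close> unfolding Hausdorff_space_def by blast
    have "openin sorgenfrey01 {x \<in> topspace sorgenfrey01. i x \<in> Bs}"
      using openin_continuous_map_preimage[OF cont AB(2)] .
    moreover have "y \<in> {x \<in> topspace sorgenfrey01. i x \<in> Bs}" using y AB sorg_topspace by auto
    ultimately obtain e where e: "e > 0" "{y..<y+e} \<inter> {0..<1} \<subseteq> {x \<in> topspace sorgenfrey01. i x \<in> Bs}"
      using sorg_open by blast
    show ?thesis
    proof (intro exI conjI ballI notI e(1))
      fix x assume x: "x \<in> Lset X i z" and yx: "y < x \<and> x < y + e"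
      then obtain q where q: "\<forall>n. q n \<in> {0..<1}" "limitin X (\<lambda>n. i (q n)) z sequentially" "q \<longlonglongrightarrow> x"
        unfolding Lset_def by blast
      have "eventually (\<lambda>n. i (q n) \<in> A) sequentially" using q(2) AB by (simp add: limitin_def)
      moreover have "eventually (\<lambda>n. y < q n) sequentially" using q(3) yx order_tendstoD(1) by blast
      moreover have "eventually (\<lambda>n. q n < y + e) sequentially" using q(3) yx order_tendstoD(2) by blast
      ultimately have "eventually (\<lambda>n. i (q n) \<in> A \<and> y < q n \<and> q n < y + e) sequentially"
        by (simp add: eventually_conj_iff)
      then obtain N where "\<forall>n\<ge>N. i (q n) \<in> A \<and> y < q n \<and> q n < y + e"
        unfolding eventually_sequentially by blast
      then have n: "i (q N) \<in> A" "y < q N" "q N < y + e" by auto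
      have "q N \<in> {y..<y+e} \<inter> {0..<1}" using n q(1) by auto
      then have "q N \<in> {x \<in> topspace sorgenfrey01. i x \<in> Bs}" by (rule subsetD[OF e(2)])
      then have "i (q N) \<in> Bs" by blast
      then show False using n AB(5) by (auto simp: disjnt_def)
    qed (rule e(1))
  qed
  show "\<forall>S. S \<subseteq> Lset X i z \<and> S \<noteq> {} \<longrightarrow> (\<exists>m\<in>S. \<forall>s\<in>S. m \<le> s)"
  proof (intro allI impI)
    fix S assume S: "S \<subseteq> Lset X i z \<and> S \<noteq> {}"
    have S01: "S \<subseteq> {0..1}" using S unfolding Lset_def by auto
    have bdd: "bdd_below S" unfolding bdd_below_def using S01 by (intro exI[of _ 0]) auto
    define s where "s = Inf S"
    have sle: "\<forall>t\<in>S. s \<le> t" unfolding s_def using bdd by (auto intro: cInf_lower)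
    show "\<exists>m\<in>S. \<forall>s\<in>S. m \<le> s"
    proof (cases "s \<in> S")
      case True then show ?thesis using sle by blast
    next
      case False
      have s0: "0 \<le> s" unfolding s_def using S S01 by (intro cInf_greatest) auto
      obtain t0 where "t0 \<in> S" using S by blast
      show ?thesis
      proof (cases "s < 1")
        case True
        then obtain e where e: "e > 0" "\<forall>x\<in>Lset X i z. \<not> (s < x \<and> x < s + e)"
          using key s0 by auto
        have "Inf S < s + e" using e unfolding s_def by simp
        then obtain t where "t \<in> S" "t < s + e" using cInf_less_iff[OF _ bdd] S by blast
        moreover have "s < t" using sle \<open>t \<in> S\<close> False by (metis order_le_less)
        ultimately show ?thesis using e S by blast
      next
        case False
        have "t0 \<le> 1" using \<open>t0 \<in> S\<close> S01 by auto
        moreover have "s \<le> t0" using sle \<open>t0 \<in> S\<close> by blast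
        ultimately have "t0 = s" using False by linarith
        then show ?thesis using \<open>t0 \<in> S\<close> \<open>s \<notin> S\<close> by simp
      qed
    qed
  qed
qed

end
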